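(* For all integers $p\ge1$ and $M,N\ge1$, $\lim_{r\to\infty}d_p^r(M,N)=\delta_p(M,N)$.
   Context: For integers $M,N,p,r\ge1$, consider triples $(i,a,b)$ with $i\in\mathbb Z_M^r$, $a\in\mathbb Z_M^p$, $b\in\mathbb Z_N^p$, with cyclic conventions $i_{r+1}=i_1$, $b_{p+1}=b_1$. For $x\in\{1,\dots,r\}$, condition $(E_x)$ says that the multisets $\{(i_x+a_y,b_y),(i_{x+1}+a_y,b_{y+1}):y=1,\dots,p\}$ and $\{(i_x+a_y,b_{y+1}),(i_{x+1}+a_y,b_y):y=1,\dots,p\}$ of elements of $\mathbb Z_M\times\mathbb Z_N$ (counted with multiplicity) coincide. Define $d_p^r(M,N)=\frac{1}{M^{p+r}N^p}\#\{(i,a,b):(E_x)\text{ holds for all }x\}$ and $\delta_p(M,N)=\frac{1}{(MN)^p}\#\{(a,b)\in\mathbb Z_M^p\times\mathbb Z_N^p:\{(a_y,b_y)\}_{y=1}^p=\{(a_y,b_{y+1})\}_{y=1}^p\text{ as multisets}\}$. *)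

theory Defs
  imports Complex_Main "HOL-Library.Multiset" "HOL-Library.FuncSet"
begin

text \<open>Elements of Z_M are represented by 0..<M (arithmetic mod M); tuples in Z_M^r are
  extensional functions {0..<r} -> {0..<M}, indices 0-based, cyclic successor (x+1) mod r.\<close>

definition cond_E :: "nat \<Rightarrow> nat \<Rightarrow> nat \<Rightarrow> nat \<Rightarrow> (nat \<Rightarrow> nat) \<Rightarrow> (nat \<Rightarrow> nat) \<Rightarrow> (nat \<Rightarrow> nat) \<Rightarrow> nat \<Rightarrow> bool" where
  "cond_E M N p r i a b x \<longleftrightarrow>
     (\<Sum>y<p. {# ((i x + a y) mod M, b y), ((i ((x+1) mod r) + a y) mod M, b ((y+1) mod p)) #})
   = (\<Sum>y<p. {# ((i x + a y) mod M, b ((y+1) mod p)), ((i ((x+1) mod r) + a y) mod M, b y) #})"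

definition d_pr :: "nat \<Rightarrow> nat \<Rightarrow> nat \<Rightarrow> nat \<Rightarrow> real" where
  "d_pr p r M N =
     real (card {(i, a, b). i \<in> {0..<r} \<rightarrow>\<^sub>E {0..<M} \<and> a \<in> {0..<p} \<rightarrow>\<^sub>E {0..<M} \<and>
                b \<in> {0..<p} \<rightarrow>\<^sub>E {0..<N} \<and> (\<forall>x<r. cond_E M N p r i a b x)})
     / (real M ^ (p + r) * real N ^ p)"

definition delta_p :: "nat \<Rightarrow> nat \<Rightarrow> nat \<Rightarrow> real" where
  "delta_p p M N =
     real (card {(a, b). a \<in> {0..<p} \<rightarrow>\<^sub>E {0..<M} \<and> b \<in> {0..<p} \<rightarrow>\<^sub>E {0..<N} \<and>
                (\<Sum>y<p. {# (a y, b y) #}) = (\<Sum>y<p. {# (a y, b ((y+1) mod p)) #})})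
     / (real M * real N) ^ p"

end

theory Submission
  imports Defs
begin


definition PP :: "nat \<Rightarrow> nat \<Rightarrow> (nat \<Rightarrow> nat) \<Rightarrow> (nat \<Rightarrow> nat) \<Rightarrow> nat \<Rightarrow> nat \<Rightarrow> bool" where
  "PP M p a b u v \<longleftrightarrow>
     (\<Sum>y<p. {# ((u + a y) mod M, b y), ((v + a y) mod M, b ((y+1) mod p)) #})
   = (\<Sum>y<p. {# ((u + a y) mod M, b ((y+1) mod p)), ((v + a y) mod M, b y) #})"

lemma cond_E_PP: "cond_E M N p r i a b x = PP M p a b (i x) (i ((x+1) mod r))"
  by (simp add: cond_E_def PP_def)

definition XX :: "nat \<Rightarrow> nat \<Rightarrow> (nat \<Rightarrow> nat) \<Rightarrow> (nat \<Rightarrow> nat) \<Rightarrow> nat \<Rightarrow> (nat \<times> nat) multiset" where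
  "XX M p a b u = (\<Sum>y<p. {# ((u + a y) mod M, b y) #})"
definition YY :: "nat \<Rightarrow> nat \<Rightarrow> (nat \<Rightarrow> nat) \<Rightarrow> (nat \<Rightarrow> nat) \<Rightarrow> nat \<Rightarrow> (nat \<times> nat) multiset" where
  "YY M p a b u = (\<Sum>y<p. {# ((u + a y) mod M, b ((y+1) mod p)) #})"

lemma PP_XY: "PP M p a b u v \<longleftrightarrow> XX M p a b u + YY M p a b v = YY M p a b u + XX M p a b v"
proof -
  have e: "\<And>s t. {#s, t#} = {#s#} + {#t#}" by simp
  show ?thesis unfolding PP_def XX_def YY_def e sum.distrib
    by (simp add: ac_simps)
qed


lemma sum_shift1:
  fixes G :: "nat \<Rightarrow> 'b::comm_monoid_add"
  shows "(\<Sum>v<n. G ((v + 1) mod n)) = (\<Sum>v<n. G v)"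
proof (cases n)
  case 0 then show ?thesis by simp
next
  case (Suc m)
  have "(\<Sum>v<Suc m. G ((v + 1) mod Suc m)) = (\<Sum>v<m. G ((v + 1) mod Suc m)) + G 0"
    by (simp add: sum.lessThan_Suc)
  also have "(\<Sum>v<m. G ((v + 1) mod Suc m)) = (\<Sum>v<m. G (Suc v))"
    by (rule sum.cong) auto
  also have "\<dots> + G 0 = (\<Sum>v<Suc m. G v)"
    by (subst sum.lessThan_Suc_shift) (simp add: add.commute)
  finally show ?thesis using Suc by simp
qed

lemma sum_shift_mod:
  fixes F :: "nat \<Rightarrow> 'b::comm_monoid_add"
  shows "(\<Sum>v<n. F ((v + k) mod n)) = (\<Sum>v<n. F v)"
proof (induction k)
  case 0 then show ?case by (intro sum.cong) auto
next
  case (Suc k)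
  have "(\<Sum>v<n. F ((v + Suc k) mod n)) = (\<Sum>v<n. (\<lambda>w. F ((w + k) mod n)) ((v + 1) mod n))"
    by (intro sum.cong refl) (simp add: mod_add_left_eq)
  also have "\<dots> = (\<Sum>v<n. F ((v + k) mod n))" by (rule sum_shift1)
  finally show ?case using Suc by simp
qed

lemma img_sum: "(\<Sum>y<(n::nat). {#g (f y)#}) = image_mset g (\<Sum>y<n. {#f y#})"
  by (induct n) auto

lemma good_iff:
  assumes a: "\<forall>y<p. a y < M" and M: "M \<ge> 1"
  shows "(\<forall>u<M. \<forall>v<M. PP M p a b u v) \<longleftrightarrow>
     (\<Sum>y<p. {#(a y, b y)#}) = (\<Sum>y<p. {#(a y, b ((y+1) mod p))#})"
    (is "?L \<longleftrightarrow> ?X0 = ?Y0")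
proof -
  have X0: "XX M p a b 0 = ?X0" unfolding XX_def by (intro sum.cong) (auto simp: a)
  have Y0: "YY M p a b 0 = ?Y0" unfolding YY_def by (intro sum.cong) (auto simp: a)
  define h where "h u = (\<lambda>(c::nat, n::nat). ((u + c) mod M, n))" for u
  have Xu: "XX M p a b u = image_mset (h u) ?X0" for u
    unfolding XX_def h_def by (subst img_sum[symmetric]) simp
  have Yu: "YY M p a b u = image_mset (h u) ?Y0" for u
    unfolding YY_def h_def by (subst img_sum[symmetric]) simp
  define W where "W n = (\<Sum>c<M. {#(c, n)#})" for n :: nat
  have WW: "(\<Sum>v<M. {#((v + k) mod M, n)#}) = W n" for k n
    unfolding W_def by (rule sum_shift_mod[where F="\<lambda>c. {#(c,n)#}"])
  have SX: "(\<Sum>v<M. XX M p a b v) = (\<Sum>y<p. W (b y))"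
  proof -
    have "(\<Sum>v<M. XX M p a b v) = (\<Sum>y<p. \<Sum>v<M. {#((v + a y) mod M, b y)#})"
      unfolding XX_def by (subst sum.swap) (simp add: add.commute)
    also have "\<dots> = (\<Sum>y<p. W (b y))"
      by (simp add: WW)
    finally show ?thesis .
  qed
  have SY: "(\<Sum>v<M. YY M p a b v) = (\<Sum>y<p. W (b ((y+1) mod p)))"
  proof -
    have "(\<Sum>v<M. YY M p a b v) = (\<Sum>y<p. \<Sum>v<M. {#((v + a y) mod M, b ((y+1) mod p))#})"
      unfolding YY_def by (subst sum.swap) (simp add: add.commute)
    also have "\<dots> = (\<Sum>y<p. W (b ((y+1) mod p)))"
      by (simp add: WW)
    finally show ?thesis .
  qed
  have SXY: "(\<Sum>v<M. XX M p a b v) = (\<Sum>v<M. YY M p a b v)"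
    unfolding SX SY by (rule sum_shift_mod[where F="\<lambda>y. W (b y)", symmetric])
  show ?thesis
  proof
    assume L: ?L
    show "?X0 = ?Y0"
    proof (rule multiset_eqI)
      fix z
      have eq: "count (XX M p a b 0) z + count (YY M p a b v) z
              = count (YY M p a b 0) z + count (XX M p a b v) z" if "v < M" for v
      proof -
        have "XX M p a b 0 + YY M p a b v = YY M p a b 0 + XX M p a b v"
          using L that M by (simp add: PP_XY[symmetric])
        then show ?thesis by (metis count_union)
      qed
      have "(\<Sum>v<M. count (XX M p a b 0) z + count (YY M p a b v) z)
          = (\<Sum>v<M. count (YY M p a b 0) z + count (XX M p a b v) z)"
        using eq by (intro sum.cong) auto
      then have "M * count (XX M p a b 0) z + count (\<Sum>v<M. YY M p a b v) z
          = M * count (YY M p a b 0) z + count (\<Sum>v<M. XX M p a b v) z"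
        by (simp add: sum.distrib count_sum)
      then have "M * count (XX M p a b 0) z = M * count (YY M p a b 0) z"
        using SXY by simp
      then show "count ?X0 z = count ?Y0 z" using M X0 Y0 by simp
    qed
  next
    assume "?X0 = ?Y0"
    then have "XX M p a b u = YY M p a b u" for u using Xu Yu by simp
    then show ?L by (simp add: PP_XY add.commute)
  qed
qed

definition UU :: "nat \<Rightarrow> nat \<Rightarrow> nat \<Rightarrow> nat \<Rightarrow> (nat \<Rightarrow> nat) set" where
  "UU M u0 v0 n = {j \<in> {0..<2*n} \<rightarrow>\<^sub>E {0..<M}. \<forall>k<n. \<not> (j (2*k) = u0 \<and> j (2*k+1) = v0)}"

lemma UU_finite: "finite (UU M u0 v0 n)"
  unfolding UU_def by (rule finite_subset[OF _ finite_PiE[of "{0..<2*n}" "\<lambda>_. {0..<M}"]]) auto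

lemma UU_card:
  assumes "u0 < M" "v0 < M"
  shows "card (UU M u0 v0 n) \<le> (M*M - 1)^n"
proof (induction n)
  case 0
  have "UU M u0 v0 0 \<subseteq> {0..<2*0} \<rightarrow>\<^sub>E {0..<M}" unfolding UU_def by auto
  then have "card (UU M u0 v0 0) \<le> card ({0..<2*(0::nat)} \<rightarrow>\<^sub>E {0..<(M::nat)})"
    by (intro card_mono) auto
  also have "\<dots> = 1" by (simp add: card_PiE)
  finally show ?case by simp
next
  case (Suc n)
  define Q where "Q = {0..<M} \<times> {0..<M} - {(u0, v0)}"
  have cQ: "card Q = M*M - 1" unfolding Q_def using assms by (simp add: card_Diff_singleton)
  define f where "f j = (restrict j {0..<2*n}, (j (2*n), j (2*n+1)))" for j :: "nat \<Rightarrow> nat"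
  have img: "f ` UU M u0 v0 (Suc n) \<subseteq> UU M u0 v0 n \<times> Q"
  proof
    fix z assume "z \<in> f ` UU M u0 v0 (Suc n)"
    then obtain j where j: "j \<in> UU M u0 v0 (Suc n)" and z: "z = f j" by auto
    have jP: "j \<in> {0..<2*Suc n} \<rightarrow>\<^sub>E {0..<M}" and jk: "\<forall>k<Suc n. \<not> (j (2*k) = u0 \<and> j (2*k+1) = v0)"
      using j unfolding UU_def by auto
    have "restrict j {0..<2*n} \<in> UU M u0 v0 n"
      unfolding UU_def using jP jk by (auto simp: PiE_iff)
    moreover have "(j (2*n), j (2*n+1)) \<in> Q"
      unfolding Q_def using jP jk by (auto simp: PiE_iff)
    ultimately show "z \<in> UU M u0 v0 n \<times> Q" using z f_def by simp
  qed
  have inj: "inj_on f (UU M u0 v0 (Suc n))"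
  proof (rule inj_onI)
    fix j j' assume j: "j \<in> UU M u0 v0 (Suc n)" and j': "j' \<in> UU M u0 v0 (Suc n)" and e: "f j = f j'"
    have jP: "j \<in> {0..<2*Suc n} \<rightarrow>\<^sub>E {0..<M}" "j' \<in> {0..<2*Suc n} \<rightarrow>\<^sub>E {0..<M}"
      using j j' unfolding UU_def by auto
    show "j = j'"
    proof (rule PiE_ext[OF jP])
      fix i assume "i \<in> {0..<2*Suc n}"
      then have "i < 2*n \<or> i = 2*n \<or> i = 2*n+1" by auto
      then show "j i = j' i"
      proof (elim disjE)
        assume "i < 2*n"
        then show ?thesis using e unfolding f_def by (metis Pair_inject atLeastLessThan_iff le0 restrict_apply')
      qed (use e f_def in auto)
    qed
  qed
  have "card (UU M u0 v0 (Suc n)) \<le> card (UU M u0 v0 n \<times> Q)"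
    using card_inj_on_le[OF inj img] UU_finite Q_def by (simp add: finite_SigmaI)
  also have "\<dots> = card (UU M u0 v0 n) * (M*M-1)" by (simp add: card_cartesian_product cQ)
  also have "\<dots> \<le> (M*M-1)^n * (M*M-1)" using Suc.IH by simp
  finally show ?case by (simp add: mult.commute)
qed

definition TT :: "nat \<Rightarrow> nat \<Rightarrow> nat \<Rightarrow> nat \<Rightarrow> (nat \<Rightarrow> nat) set" where
  "TT M u0 v0 r = {i \<in> {0..<r} \<rightarrow>\<^sub>E {0..<M}. \<forall>k<r div 2. \<not> (i (2*k) = u0 \<and> i (2*k+1) = v0)}"

lemma TT_card:
  assumes "u0 < M" "v0 < M" "r \<ge> 1"
  shows "card (TT M u0 v0 r) \<le> M * (M*M - 1)^(r div 2)"
proof -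
  define n where "n = r div 2"
  define g where "g i = (restrict i {0..<2*n}, i (r - 1))" for i :: "nat \<Rightarrow> nat"
  have img: "g ` TT M u0 v0 r \<subseteq> UU M u0 v0 n \<times> {0..<M}"
  proof
    fix z assume "z \<in> g ` TT M u0 v0 r"
    then obtain i where i: "i \<in> TT M u0 v0 r" and z: "z = g i" by auto
    have iP: "i \<in> {0..<r} \<rightarrow>\<^sub>E {0..<M}" and ik: "\<forall>k<n. \<not> (i (2*k) = u0 \<and> i (2*k+1) = v0)"
      using i unfolding TT_def n_def by auto
    have "restrict i {0..<2*n} \<in> UU M u0 v0 n"
      unfolding UU_def using iP ik by (auto simp: PiE_iff n_def)
    moreover have "i (r - 1) \<in> {0..<M}" using iP assms(3) by (auto simp: PiE_iff)
    ultimately show "z \<in> UU M u0 v0 n \<times> {0..<M}" using z g_def by simp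
  qed
  have inj: "inj_on g (TT M u0 v0 r)"
  proof (rule inj_onI)
    fix j j' assume j: "j \<in> TT M u0 v0 r" and j': "j' \<in> TT M u0 v0 r" and e: "g j = g j'"
    have jP: "j \<in> {0..<r} \<rightarrow>\<^sub>E {0..<M}" "j' \<in> {0..<r} \<rightarrow>\<^sub>E {0..<M}"
      using j j' unfolding TT_def by auto
    show "j = j'"
    proof (rule PiE_ext[OF jP])
      fix i assume "i \<in> {0..<r}"
      then have "i < 2*n \<or> i = r - 1" unfolding n_def by auto
      then show "j i = j' i"
      proof (elim disjE)
        assume "i < 2*n"
        then show ?thesis using e unfolding g_def by (metis Pair_inject atLeastLessThan_iff le0 restrict_apply')
      qed (use e g_def in auto)
    qed
  qed
  have "card (TT M u0 v0 r) \<le> card (UU M u0 v0 n \<times> {0..<M})"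
    using card_inj_on_le[OF inj img] UU_finite by (simp add: finite_SigmaI)
  also have "\<dots> = card (UU M u0 v0 n) * M" by (simp add: card_cartesian_product)
  also have "\<dots> \<le> (M*M-1)^n * M" using UU_card[OF assms(1,2)] by simp
  finally show ?thesis by (simp add: mult.commute n_def)
qed

lemma div2_tendsto: "filterlim (\<lambda>r::nat. r div 2) at_top sequentially"
  unfolding filterlim_at_top eventually_sequentially
proof (intro allI)
  fix Z :: nat show "\<exists>N. \<forall>n\<ge>N. Z \<le> n div 2" by (intro exI[of _ "2*Z"]) auto
qed

theorem theorem5p4:
  fixes p M N :: nat
  assumes "p \<ge> 1" and "M \<ge> 1" and "N \<ge> 1"
  shows "(\<lambda>r. d_pr p r M N) \<longlonglongrightarrow> delta_p p M N"
proof -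
  define AB where "AB = ({0..<p} \<rightarrow>\<^sub>E {0..<M}) \<times> ({0..<p} \<rightarrow>\<^sub>E {0..<N})"
  define C where "C r ab = {i \<in> {0..<r} \<rightarrow>\<^sub>E {0..<M}. \<forall>x<r. cond_E M N p r i (fst ab) (snd ab) x}"
    for r ab
  define good where "good ab = (\<forall>u<M. \<forall>v<M. PP M p (fst ab) (snd ab) u v)" for ab
  define Good where "Good = {ab\<in>AB. good ab}"
  define Bad where "Bad = {ab\<in>AB. \<not> good ab}"
  define B where "B r = (\<Sum>ab\<in>Bad. card (C r ab))" for r
  have finAB: "finite AB" unfolding AB_def by (simp add: finite_PiE)
  have finC: "finite (C r ab)" for r ab
    unfolding C_def by (rule finite_subset[OF _ finite_PiE[of "{0..<r}" "\<lambda>_. {0..<M}"]]) auto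
  have finG: "finite Good" "finite Bad" using finAB unfolding Good_def Bad_def by auto
  have S: "{(i, a, b). i \<in> {0..<r} \<rightarrow>\<^sub>E {0..<M} \<and> a \<in> {0..<p} \<rightarrow>\<^sub>E {0..<M} \<and>
                b \<in> {0..<p} \<rightarrow>\<^sub>E {0..<N} \<and> (\<forall>x<r. cond_E M N p r i a b x)}
        = (\<lambda>z. (snd z, fst z)) ` (SIGMA ab:AB. C r ab)" for r
  proof (intro equalityI subsetI)
    fix z assume "z \<in> {(i, a, b). i \<in> {0..<r} \<rightarrow>\<^sub>E {0..<M} \<and> a \<in> {0..<p} \<rightarrow>\<^sub>E {0..<M} \<and>
                b \<in> {0..<p} \<rightarrow>\<^sub>E {0..<N} \<and> (\<forall>x<r. cond_E M N p r i a b x)}"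
    then obtain i a b where z: "z = (i, a, b)" and h: "i \<in> {0..<r} \<rightarrow>\<^sub>E {0..<M}"
      "a \<in> {0..<p} \<rightarrow>\<^sub>E {0..<M}" "b \<in> {0..<p} \<rightarrow>\<^sub>E {0..<N}" "\<forall>x<r. cond_E M N p r i a b x"
      by blast
    have "((a, b), i) \<in> (SIGMA ab:AB. C r ab)" unfolding AB_def C_def using h by simp
    moreover have "z = (\<lambda>z. (snd z, fst z)) ((a, b), i)" using z by simp
    ultimately show "z \<in> (\<lambda>z. (snd z, fst z)) ` (SIGMA ab:AB. C r ab)" by blast
  next
    fix z assume "z \<in> (\<lambda>z. (snd z, fst z)) ` (SIGMA ab:AB. C r ab)"
    then obtain a b i where z: "z = (i, a, b)" and h: "(a, b) \<in> AB" "i \<in> C r (a, b)" by force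
    then show "z \<in> {(i, a, b). i \<in> {0..<r} \<rightarrow>\<^sub>E {0..<M} \<and> a \<in> {0..<p} \<rightarrow>\<^sub>E {0..<M} \<and>
                b \<in> {0..<p} \<rightarrow>\<^sub>E {0..<N} \<and> (\<forall>x<r. cond_E M N p r i a b x)}"
      unfolding AB_def C_def by simp
  qed
  have cardS: "card {(i, a, b). i \<in> {0..<r} \<rightarrow>\<^sub>E {0..<M} \<and> a \<in> {0..<p} \<rightarrow>\<^sub>E {0..<M} \<and>
                b \<in> {0..<p} \<rightarrow>\<^sub>E {0..<N} \<and> (\<forall>x<r. cond_E M N p r i a b x)}
        = (\<Sum>ab\<in>AB. card (C r ab))" for r
  proof -
    have "inj_on (\<lambda>z. (snd z, fst z)) (SIGMA ab:AB. C r ab)" by (auto simp: inj_on_def)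
    then show ?thesis unfolding S by (simp add: card_image finAB finC)
  qed
  have ABsplit: "AB = Good \<union> Bad" "Good \<inter> Bad = {}" unfolding Good_def Bad_def by auto
  have CG: "C r ab = {0..<r} \<rightarrow>\<^sub>E {0..<M}" if "ab \<in> Good" for r ab
  proof -
    have "i \<in> C r ab" if i: "i \<in> {0..<r} \<rightarrow>\<^sub>E {0..<M}" for i
    proof -
      have "cond_E M N p r i (fst ab) (snd ab) x" if "x < r" for x
      proof -
        have "(x+1) mod r < r" using that by simp
        then have "i x < M" "i ((x+1) mod r) < M" using i \<open>x < r\<close> by (auto simp: PiE_iff)
        then show ?thesis using \<open>ab \<in> Good\<close> unfolding cond_E_PP Good_def good_def by auto
      qed
      then show ?thesis unfolding C_def using i by auto
    qed
    then show ?thesis unfolding C_def by auto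
  qed
  have cardS2: "card {(i, a, b). i \<in> {0..<r} \<rightarrow>\<^sub>E {0..<M} \<and> a \<in> {0..<p} \<rightarrow>\<^sub>E {0..<M} \<and>
                b \<in> {0..<p} \<rightarrow>\<^sub>E {0..<N} \<and> (\<forall>x<r. cond_E M N p r i a b x)}
        = card Good * M^r + B r" for r
  proof -
    have "(\<Sum>ab\<in>AB. card (C r ab)) = (\<Sum>ab\<in>Good. card (C r ab)) + B r"
      unfolding B_def ABsplit(1) by (rule sum.union_disjoint) (use finG ABsplit in auto)
    also have "(\<Sum>ab\<in>Good. card (C r ab)) = (\<Sum>ab\<in>Good. M^r)"
      by (intro sum.cong refl) (simp add: CG card_PiE)
    finally show ?thesis unfolding cardS by simp
  qed
  have D: "{(a, b). a \<in> {0..<p} \<rightarrow>\<^sub>E {0..<M} \<and> b \<in> {0..<p} \<rightarrow>\<^sub>E {0..<N} \<and>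
                (\<Sum>y<p. {# (a y, b y) #}) = (\<Sum>y<p. {# (a y, b ((y+1) mod p)) #})} = Good"
  proof -
    have "good (a, b) \<longleftrightarrow> (\<Sum>y<p. {# (a y, b y) #}) = (\<Sum>y<p. {# (a y, b ((y+1) mod p)) #})"
      if "a \<in> {0..<p} \<rightarrow>\<^sub>E {0..<M}" for a b
    proof -
      have "\<forall>y<p. a y < M" using that by (auto simp: PiE_iff)
      then show ?thesis unfolding good_def using good_iff[of p a M b] assms(2) by simp
    qed
    then show ?thesis unfolding Good_def AB_def by auto
  qed
  have Bbound: "B r \<le> card AB * (M * (M*M - 1)^(r div 2))" if r: "r \<ge> 1" for r
  proof -
    have "card (C r ab) \<le> M * (M*M - 1)^(r div 2)" if ab: "ab \<in> Bad" for ab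
    proof -
      obtain u0 v0 where uv: "u0 < M" "v0 < M" "\<not> PP M p (fst ab) (snd ab) u0 v0"
        using ab unfolding Bad_def good_def by auto
      have "C r ab \<subseteq> TT M u0 v0 r"
      proof
        fix i assume i: "i \<in> C r ab"
        have "\<not> (i (2*k) = u0 \<and> i (2*k+1) = v0)" if k: "k < r div 2" for k
        proof -
          have "2*k < r" "(2*k+1) mod r = 2*k+1" using k by auto
          then have "PP M p (fst ab) (snd ab) (i (2*k)) (i (2*k+1))"
            using i unfolding C_def cond_E_PP by force
          then show ?thesis using uv by auto
        qed
        then show "i \<in> TT M u0 v0 r" using i unfolding C_def TT_def by auto
      qed
      then have "card (C r ab) \<le> card (TT M u0 v0 r)"
        by (intro card_mono) (auto simp: TT_def intro: finite_subset[OF _ finite_PiE[of "{0..<r}" "\<lambda>_. {0..<M}"]])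
      also have "\<dots> \<le> M * (M*M - 1)^(r div 2)" by (rule TT_card[OF uv(1,2) r])
      finally show ?thesis .
    qed
    then have "B r \<le> of_nat (card Bad) * (M * (M*M - 1)^(r div 2))"
      unfolding B_def by (intro sum_bounded_above) blast
    then have "B r \<le> card Bad * (M * (M*M - 1)^(r div 2))" by simp
    also have "card Bad \<le> card AB" using finAB unfolding Bad_def by (intro card_mono) auto
    then have "card Bad * (M * (M*M - 1)^(r div 2)) \<le> card AB * (M * (M*M - 1)^(r div 2))"
      by simp
    finally show ?thesis .
  qed
  define G where "G = real (card Good)"
  define K where "K = (real M * real N)^p"
  have Kpos: "K > 0" unfolding K_def using assms by simp
  have dform: "d_pr p r M N = G / K + (real (B r) / real M ^ r) / K" for r
  proof -
    have "d_pr p r M N = (G * real M ^ r + real (B r)) / (real M ^ (p + r) * real N ^ p)"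
      unfolding d_pr_def cardS2 G_def by simp
    also have "\<dots> = G / K + (real (B r) / real M ^ r) / K"
      unfolding K_def using assms by (simp add: field_simps power_add power_mult_distrib)
    finally show ?thesis .
  qed
  have delta: "delta_p p M N = G / K" unfolding delta_p_def D G_def K_def by simp
  define q where "q = (real M * real M - 1) / (real M * real M)"
  have M1: "1 \<le> real M * real M" using assms by (metis mult_le_cancel_left1 of_nat_1 of_nat_le_iff of_nat_mult nat_mult_1 mult_le_mono)
  have q: "0 \<le> q" "q < 1" unfolding q_def using M1 by (auto simp: field_simps)
  have qlim: "(\<lambda>r. real (card AB) * real M * q ^ (r div 2)) \<longlonglongrightarrow> 0"
  proof -
    have "(\<lambda>n. q ^ n) \<longlonglongrightarrow> 0" using q by (intro LIMSEQ_power_zero) simp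
    then have "(\<lambda>r. q ^ (r div 2)) \<longlonglongrightarrow> 0" by (rule filterlim_compose[OF _ div2_tendsto])
    then show ?thesis by (auto intro: tendsto_eq_intros)
  qed
  have Elim: "(\<lambda>r. real (B r) / real M ^ r) \<longlonglongrightarrow> 0"
  proof (rule tendsto_sandwich[OF _ _ tendsto_const qlim])
    show "\<forall>\<^sub>F r in sequentially. 0 \<le> real (B r) / real M ^ r" by simp
    show "\<forall>\<^sub>F r in sequentially. real (B r) / real M ^ r \<le> real (card AB) * real M * q ^ (r div 2)"
      unfolding eventually_sequentially
    proof (intro exI[of _ 1] allI impI)
      fix r :: nat assume r: "r \<ge> 1"
      define n where "n = r div 2"
      have Mp: "real M > 0" using assms by simp
      have "real (B r) \<le> real (card AB) * (real M * (real M * real M - 1)^n)"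
      proof -
        have "real (B r) \<le> real (card AB * (M * (M*M - 1)^n))"
          using Bbound[OF r] unfolding n_def by linarith
        moreover have "real (M*M - 1) = real M * real M - 1" using assms by (simp add: of_nat_diff)
        ultimately show ?thesis by simp
      qed
      moreover have "real M ^ (2*n) \<le> real M ^ r" using assms
        by (intro power_increasing) (auto simp: n_def)
      moreover have "q ^ n = (real M * real M - 1)^n / real M ^ (2*n)"
        unfolding q_def by (simp add: power_divide power_mult power2_eq_square)
      moreover have "0 \<le> real M * real M - 1" using M1 by simp
      ultimately show "real (B r) / real M ^ r \<le> real (card AB) * real M * q ^ (r div 2)"
        unfolding n_def[symmetric]
      proof -
        assume h1: "real (B r) \<le> real (card AB) * (real M * (real M * real M - 1)^n)"
          and h2: "real M ^ (2*n) \<le> real M ^ r"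
          and h3: "q ^ n = (real M * real M - 1)^n / real M ^ (2*n)"
          and h4: "0 \<le> real M * real M - 1"
        have p2: "real M ^ (2*n) > 0" using Mp by simp
        have "real (B r) / real M ^ r \<le> real (B r) / real M ^ (2*n)"
          using h2 p2 Mp by (intro divide_left_mono) auto
        also have "\<dots> \<le> real (card AB) * (real M * (real M * real M - 1)^n) / real M ^ (2*n)"
          using h1 p2 by (intro divide_right_mono) auto
        also have "\<dots> = real (card AB) * real M * q ^ n" using h3 by simp
        finally show "real (B r) / real M ^ r \<le> real (card AB) * real M * q ^ n" .
      qed
    qed
  qed
  have "(\<lambda>r. G / K + (real (B r) / real M ^ r) / K) \<longlonglongrightarrow> G / K + 0 / K"
    by (intro tendsto_intros Elim) (use Kpos in simp)
  then show ?thesis unfolding dform delta by simp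
qed
end
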